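(* Let $m,n$ be nonzero integers with $|m|<|n|$, and let $u$ be a vertex of $\Lambda_{m,n}$. Then $u$ is of type $a$ if and only if there exists a finite set $V_u$ of vertices of $\Lambda_{m,n}$, each at distance $2$ from $u$, such that $\mathrm{lk}_\Lambda(u)\subseteq \bigcup_{v\in V_u} \mathrm{lk}_\Lambda(v)$.
   Context: $\mathrm{BS}(m,n)=\langle a,t\mid ta^mt^{-1}=a^n\rangle$; its Cayley graph $\Upsilon_{m,n}$ for $\{a,t\}$ has $a$-lines (subgraphs spanned by left cosets $g\langle a\rangle$) and $t$-lines (spanned by left cosets $g\langle t\rangle$), called standard lines. $\Lambda_{m,n}$ is the graph with one vertex per standard line, two vertices being adjacent if the corresponding lines intersect; the type of a vertex is $a$ or $t$ according to the label of its line. $\Lambda_{m,n}$ has the path metric with edges of length $1$, and $\mathrm{lk}_\Lambda(u)$ denotes the set of vertices at distance $1$ from $u$. *)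

theory Defs
  imports Main
begin

datatype gen = GA | GT

text \<open>A letter is a generator with an exponent sign (True = +1, False = -1).\<close>
type_synonym letter = "gen \<times> bool"
type_synonym word = "letter list"

definition apow :: "int \<Rightarrow> word" where
  "apow k = (if 0 \<le> k then replicate (nat k) (GA, True) else replicate (nat (- k)) (GA, False))"

definition tpow :: "int \<Rightarrow> word" where
  "tpow k = (if 0 \<le> k then replicate (nat k) (GT, True) else replicate (nat (- k)) (GT, False))"

inductive beq :: "int \<Rightarrow> int \<Rightarrow> word \<Rightarrow> word \<Rightarrow> bool" for m n where
  beq_refl: "beq m n w w"
| beq_sym: "beq m n w v \<Longrightarrow> beq m n v w"
| beq_trans: "beq m n u v \<Longrightarrow> beq m n v w \<Longrightarrow> beq m n u w"
| beq_cancel: "beq m n (u @ [(g, b), (g, \<not> b)] @ v) (u @ v)"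
| beq_rel: "beq m n (u @ [(GT, True)] @ apow m @ [(GT, False)] @ v) (u @ apow n @ v)"

text \<open>Group elements = equivalence classes of words.\<close>
definition elt :: "int \<Rightarrow> int \<Rightarrow> word \<Rightarrow> word set" where
  "elt m n w = {v. beq m n w v}"

datatype ltype = TypeA | TypeT

definition aline :: "int \<Rightarrow> int \<Rightarrow> word \<Rightarrow> word set set" where
  "aline m n w = {elt m n (w @ apow k) | k. True}"

definition tline :: "int \<Rightarrow> int \<Rightarrow> word \<Rightarrow> word set set" where
  "tline m n w = {elt m n (w @ tpow k) | k. True}"

text \<open>Vertices of Lambda: standard lines, recorded as (type, set of group elements).\<close>
definition LVerts :: "int \<Rightarrow> int \<Rightarrow> (ltype \<times> word set set) set" where
  "LVerts m n = {(TypeA, aline m n w) | w. True} \<union> {(TypeT, tline m n w) | w. True}"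

definition ladj :: "int \<Rightarrow> int \<Rightarrow> ltype \<times> word set set \<Rightarrow> ltype \<times> word set set \<Rightarrow> bool" where
  "ladj m n u v \<longleftrightarrow> u \<in> LVerts m n \<and> v \<in> LVerts m n \<and> u \<noteq> v \<and> snd u \<inter> snd v \<noteq> {}"

inductive lwalk :: "int \<Rightarrow> int \<Rightarrow> ltype \<times> word set set \<Rightarrow> ltype \<times> word set set \<Rightarrow> nat \<Rightarrow> bool"
  for m n where
  lwalk_nil: "u \<in> LVerts m n \<Longrightarrow> lwalk m n u u 0"
| lwalk_cons: "ladj m n u w \<Longrightarrow> lwalk m n w v k \<Longrightarrow> lwalk m n u v (Suc k)"

definition ldist_is :: "int \<Rightarrow> int \<Rightarrow> ltype \<times> word set set \<Rightarrow> ltype \<times> word set set \<Rightarrow> nat \<Rightarrow> bool" where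
  "ldist_is m n u v d \<longleftrightarrow> lwalk m n u v d \<and> (\<forall>k<d. \<not> lwalk m n u v k)"

definition lk :: "int \<Rightarrow> int \<Rightarrow> ltype \<times> word set set \<Rightarrow> (ltype \<times> word set set) set" where
  "lk m n u = {v. ldist_is m n u v 1}"

end

theory Submission
  imports Defs Complex_Main
begin


lemmas [trans] = beq.beq_trans

definition gp :: "gen \<Rightarrow> int \<Rightarrow> word" where
  "gp G k = (if 0 \<le> k then replicate (nat k) (G, True) else replicate (nat (- k)) (G, False))"

lemma apow_gp: "apow = gp GA" and tpow_gp: "tpow = gp GT"
  by (auto simp: fun_eq_iff apow_def tpow_def gp_def)

lemma beq_right: "beq m n w v \<Longrightarrow> beq m n (w@z) (v@z)"
proof (induction rule: beq.induct)
  case (beq_cancel u g b v)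
  then show ?case using beq.beq_cancel[of m n u g b "v@z"] by simp
next
  case (beq_rel u v)
  then show ?case using beq.beq_rel[of m n u "v@z"] by simp
qed (auto intro: beq.intros)

lemma beq_left: "beq m n w v \<Longrightarrow> beq m n (z@w) (z@v)"
proof (induction rule: beq.induct)
  case (beq_cancel u g b v)
  then show ?case using beq.beq_cancel[of m n "z@u" g b v] by simp
next
  case (beq_rel u v)
  then show ?case using beq.beq_rel[of m n "z@u" v] by simp
qed (auto intro: beq.intros)

lemma beq_cong: "beq m n w v \<Longrightarrow> beq m n (x@w@y) (x@v@y)"
  by (intro beq_left beq_right)

lemma elt_eq: "elt m n w = elt m n v \<longleftrightarrow> beq m n w v"
proof
  assume "elt m n w = elt m n v"
  moreover have "v \<in> elt m n v" by (simp add: elt_def beq.beq_refl)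
  ultimately have "v \<in> elt m n w" by simp
  then show "beq m n w v" by (simp add: elt_def)
next
  assume "beq m n w v"
  then show "elt m n w = elt m n v"
    by (auto simp: elt_def intro: beq.beq_trans beq.beq_sym)
qed

lemma gp_succ: "beq m n (gp G k @ [(G,True)]) (gp G (k+1))"
proof (cases "0 \<le> k")
  case True
  then have "nat (k+1) = Suc (nat k)" by simp
  then have "gp G (k+1) = gp G k @ [(G,True)]"
    using True by (simp add: gp_def replicate_append_same)
  then show ?thesis by (simp add: beq.beq_refl)
next
  case False
  then have nk: "nat (-k) = Suc (nat (-k-1))" by simp
  have e1: "gp G k = replicate (nat (-k-1)) (G,False) @ [(G,False)]"
    using False by (simp only: gp_def nk if_False replicate_append_same replicate_Suc)
  have e2: "gp G (k+1) = replicate (nat (-k-1)) (G,False)"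
    using False by (simp add: gp_def)
  show ?thesis using beq.beq_cancel[of m n "replicate (nat (-k-1)) (G,False)" G False "[]"]
    by (simp add: e1 e2)
qed

lemma gp_pred: "beq m n (gp G k @ [(G,False)]) (gp G (k-1))"
proof (cases "0 < k")
  case False
  then have "nat (-(k-1)) = Suc (nat (-k))" by simp
  then have "gp G (k-1) = gp G k @ [(G,False)]"
    using False by (simp add: gp_def replicate_append_same)
  then show ?thesis by (simp add: beq.beq_refl)
next
  case True
  then have nk: "nat k = Suc (nat (k-1))" by simp
  have e1: "gp G k = replicate (nat (k-1)) (G,True) @ [(G,True)]"
    using True by (simp only: gp_def nk replicate_append_same replicate_Suc) simp
  have e2: "gp G (k-1) = replicate (nat (k-1)) (G,True)"
    using True by (simp add: gp_def)
  show ?thesis using beq.beq_cancel[of m n "replicate (nat (k-1)) (G,True)" G True "[]"]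
    by (simp add: e1 e2)
qed

lemma gp_add: "beq m n (gp G i @ gp G j) (gp G (i+j))"
proof (induction j rule: int_induct[where k=0])
  case base
  then show ?case by (simp add: gp_def beq.beq_refl)
next
  case (step1 j)
  then have "nat (j+1) = Suc (nat j)" by simp
  then have e: "gp G (j+1) = gp G j @ [(G,True)]"
    using step1(1) by (simp add: gp_def replicate_append_same)
  have "beq m n (gp G i @ gp G j @ [(G,True)]) (gp G (i+j) @ [(G,True)])"
    using beq_right[OF step1(2), of "[(G,True)]"] by simp
  also have "beq m n \<dots> (gp G (i+j+1))" by (rule gp_succ)
  finally show ?case by (simp add: e add.assoc)
next
  case (step2 j)
  then have "nat (-(j-1)) = Suc (nat (-j))" by simp
  then have e: "gp G (j-1) = gp G j @ [(G,False)]"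
    using step2(1) by (simp add: gp_def replicate_append_same)
  have "beq m n (gp G i @ gp G j @ [(G,False)]) (gp G (i+j) @ [(G,False)])"
    using beq_right[OF step2(2), of "[(G,False)]"] by simp
  also have "beq m n \<dots> (gp G (i+j-1))" by (rule gp_pred)
  finally show ?case by (simp add: e add_diff_eq)
qed



definition gline :: "int \<Rightarrow> int \<Rightarrow> gen \<Rightarrow> word \<Rightarrow> word set set" where
  "gline m n G w = {elt m n (w @ gp G k) | k. True}"

lemma aline_gline: "aline m n w = gline m n GA w" and tline_gline: "tline m n w = gline m n GT w"
  by (simp_all add: aline_def tline_def gline_def apow_gp tpow_gp)

lemma gline_sub:
  assumes "elt m n (h @ gp G k') = elt m n (g @ gp G k)"
  shows "gline m n G h \<subseteq> gline m n G g"
proof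
  fix X assume "X \<in> gline m n G h"
  then obtain j where X: "X = elt m n (h @ gp G j)" by (auto simp: gline_def)
  have b: "beq m n (h @ gp G k') (g @ gp G k)" using assms elt_eq by blast
  have "beq m n (h @ gp G j) (h @ gp G k' @ gp G (j - k'))"
    using beq_left[OF gp_add[of m n G k' "j-k'"], of h] by (simp add: beq.beq_sym)
  also have "beq m n \<dots> (g @ gp G k @ gp G (j - k'))"
    using beq_right[OF b, of "gp G (j - k')"] by simp
  also have "beq m n \<dots> (g @ gp G (k + (j - k')))"
    using beq_left[OF gp_add] by blast
  finally have "X = elt m n (g @ gp G (k + (j - k')))" using X elt_eq by blast
  then show "X \<in> gline m n G g" by (auto simp: gline_def)
qed

lemma gline_eq:
  assumes "elt m n (h @ gp G k') = elt m n (g @ gp G k)"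
  shows "gline m n G h = gline m n G g"
  using gline_sub[OF assms] gline_sub[OF assms[symmetric]] by blast

abbreviation "AA \<equiv> (GA, True)"
abbreviation "TT \<equiv> (GT, True)"
abbreviation "TT' \<equiv> (GT, False)"

lemma conj1: "beq m n ([TT'] @ apow n) (apow m @ [TT'])"
proof -
  have "beq m n ([TT'] @ apow n) ([TT'] @ [TT] @ apow m @ [TT'])"
    using beq_left[OF beq.beq_sym[OF beq.beq_rel[of m n "[]" "[]"]], of "[TT']"] by simp
  also have "beq m n \<dots> (apow m @ [TT'])"
    using beq.beq_cancel[of m n "[]" GT False "apow m @ [TT']"] by simp
  finally show ?thesis .
qed

lemma conj_nat: "beq m n ([TT'] @ apow (n * int q)) (apow (m * int q) @ [TT'])"
proof (induction q)
  case 0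
  then show ?case by (simp add: apow_def beq.beq_refl)
next
  case (Suc q)
  have "beq m n ([TT'] @ apow (n * int (Suc q))) ([TT'] @ apow n @ apow (n * int q))"
    using beq_left[OF beq.beq_sym[OF gp_add[of m n GA n "n * int q"]], of "[TT']"]
    by (simp add: apow_gp algebra_simps)
  also have "beq m n \<dots> (apow m @ [TT'] @ apow (n * int q))"
    using beq_right[OF conj1[of m n], of "apow (n * int q)"] by simp
  also have "beq m n \<dots> (apow m @ apow (m * int q) @ [TT'])"
    using beq_left[OF Suc.IH, of "apow m"] by simp
  also have "beq m n \<dots> (apow (m * int (Suc q)) @ [TT'])"
    using beq_right[OF gp_add[of m n GA m "m * int q"], of "[TT']"]
    by (simp add: apow_gp algebra_simps)
  finally show ?case .
qed

lemma conj_int: "beq m n ([TT'] @ apow (n * q)) (apow (m * q) @ [TT'])"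
proof (cases "0 \<le> q")
  case True
  then show ?thesis using conj_nat[of m n "nat q"] by simp
next
  case False
  define p where "p = nat (- q)"
  have q: "q = - int p" using False p_def by simp
  have P: "beq m n ([TT'] @ apow (n * int p)) (apow (m * int p) @ [TT'])" by (rule conj_nat)
  have z: "beq m n (apow (n * int p) @ apow (- (n * int p))) []"
    using gp_add[of m n GA "n * int p" "- (n * int p)"] by (simp add: apow_gp gp_def)
  have z2: "beq m n (apow (- (m * int p)) @ apow (m * int p)) []"
    using gp_add[of m n GA "- (m * int p)" "m * int p"] by (simp add: apow_gp gp_def)
  have "beq m n (apow (- (m * int p)) @ [TT']) (apow (- (m * int p)) @ [TT'] @ apow (n * int p) @ apow (- (n * int p)))"
    using beq_cong[OF beq.beq_sym[OF z], of "apow (- (m * int p)) @ [TT']" "[]"] by simp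
  also have "beq m n \<dots> (apow (- (m * int p)) @ apow (m * int p) @ [TT'] @ apow (- (n * int p)))"
    using beq_cong[OF P, of "apow (- (m * int p))" "apow (- (n * int p))"] by simp
  also have "beq m n \<dots> ([TT'] @ apow (- (n * int p)))"
    using beq_right[OF z2, of "[TT'] @ apow (- (n * int p))"] by simp
  finally show ?thesis using q by (simp add: beq.beq_sym)
qed



definition rr :: "int \<Rightarrow> int \<Rightarrow> real" where "rr m n = real_of_int n / real_of_int m"

fun rl :: "int \<Rightarrow> int \<Rightarrow> letter \<Rightarrow> real \<times> real" where
  "rl m n (GA, b) = (1, if b then 1 else -1)"
| "rl m n (GT, b) = ((if b then rr m n else inverse (rr m n)), 0)"

definition cmp :: "real \<times> real \<Rightarrow> real \<times> real \<Rightarrow> real \<times> real" where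
  "cmp x y = (fst x * fst y, fst x * snd y + snd x)"

fun rho :: "int \<Rightarrow> int \<Rightarrow> word \<Rightarrow> real \<times> real" where
  "rho m n [] = (1, 0)"
| "rho m n (l # w) = cmp (rl m n l) (rho m n w)"

lemma rho_append: "rho m n (u @ v) = cmp (rho m n u) (rho m n v)"
  by (induction u) (auto simp: cmp_def algebra_simps)

lemma rho_rep: "rho m n (replicate j (GA, b)) = (1, of_nat j * (if b then 1 else -1))"
  by (induction j) (auto simp: cmp_def algebra_simps)

lemma rho_apow: "rho m n (apow k) = (1, of_int k)"
  by (auto simp: apow_def rho_rep)

lemma rho_repT: "rho m n (replicate j (GT, b)) = ((if b then rr m n else inverse (rr m n)) ^ j, 0)"
  by (induction j) (auto simp: cmp_def algebra_simps)

lemma rho_tpow: "rho m n (tpow k) = (rr m n powi k, 0)"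
  by (auto simp: tpow_def rho_repT power_int_def power_inverse)

lemma rr_nz: "m \<noteq> 0 \<Longrightarrow> n \<noteq> 0 \<Longrightarrow> rr m n \<noteq> 0"
  by (simp add: rr_def)

lemma rho_beq:
  assumes "beq m n w v" "m \<noteq> 0" "n \<noteq> 0"
  shows "rho m n w = rho m n v"
  using assms(1)
proof (induction rule: beq.induct)
  case (beq_cancel u g b v)
  have "cmp (rl m n (g, b)) (cmp (rl m n (g, \<not> b)) x) = x" for x
    using rr_nz[OF assms(2,3)] by (cases g; cases b) (auto simp: cmp_def field_simps)
  then show ?case by (simp add: rho_append)
next
  case (beq_rel u v)
  have "cmp (rl m n TT) (cmp (rho m n (apow m)) (cmp (rl m n TT') x)) = cmp (rho m n (apow n)) x" for x
    using rr_nz[OF assms(2,3)] assms(2,3) by (auto simp: cmp_def rho_apow rr_def field_simps)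
  then show ?case by (simp add: rho_append)
qed auto

lemma rho_elt:
  assumes "elt m n w = elt m n v" "m \<noteq> 0" "n \<noteq> 0"
  shows "rho m n w = rho m n v"
  using assms elt_eq rho_beq by blast

lemma rho_scale_nz: "m \<noteq> 0 \<Longrightarrow> n \<noteq> 0 \<Longrightarrow> fst (rho m n w) \<noteq> 0"
proof (induction w)
  case (Cons l w)
  then show ?case using rr_nz[of m n] by (cases l; cases "fst l"; cases "snd l") (auto simp: cmp_def)
qed auto

lemma rr_gt1: "m \<noteq> 0 \<Longrightarrow> \<bar>m\<bar> < \<bar>n\<bar> \<Longrightarrow> 1 < \<bar>rr m n\<bar>"
  by (simp add: rr_def abs_divide divide_less_eq flip: of_int_abs)

lemma arch_bound:
  fixes r C :: real
  assumes "1 < r"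
  shows "\<exists>L. \<forall>l::int. r powi l \<le> C \<longrightarrow> l \<le> L"
proof -
  obtain N where N: "C < r ^ N" using real_arch_pow[OF assms] by blast
  show ?thesis
  proof (intro exI allI impI)
    fix l :: int assume "r powi l \<le> C"
    then have "r powi l \<le> r powi (int N)" using N by simp
    then show "l \<le> int N" using power_int_le_imp_le_exp[OF assms] by simp
  qed
qed



lemma lwalk0: "lwalk m n u v 0 \<longleftrightarrow> u = v \<and> u \<in> LVerts m n"
  by (auto elim: lwalk.cases intro: lwalk.intros)

lemma lwalk1: "lwalk m n u v (Suc 0) \<longleftrightarrow> ladj m n u v"
proof
  assume "lwalk m n u v (Suc 0)"
  then show "ladj m n u v" by (cases rule: lwalk.cases) (auto simp: lwalk0)
next
  assume a: "ladj m n u v"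
  then have "v \<in> LVerts m n" by (simp add: ladj_def)
  then show "lwalk m n u v (Suc 0)" using a by (auto intro: lwalk.intros)
qed

lemma lwalk2: "lwalk m n u v (Suc (Suc 0)) \<longleftrightarrow> (\<exists>w. ladj m n u w \<and> ladj m n w v)"
proof
  assume "lwalk m n u v (Suc (Suc 0))"
  then show "\<exists>w. ladj m n u w \<and> ladj m n w v" by (cases rule: lwalk.cases) (auto simp: lwalk1)
next
  assume "\<exists>w. ladj m n u w \<and> ladj m n w v"
  then show "lwalk m n u v (Suc (Suc 0))" by (auto intro: lwalk.intros simp: lwalk1[symmetric])
qed

lemma lk_iff: "v \<in> lk m n u \<longleftrightarrow> ladj m n u v"
  by (auto simp: lk_def ldist_is_def lwalk1 lwalk0 ladj_def)

lemma ldist2: "ldist_is m n u v 2 \<longleftrightarrow> (\<exists>w. ladj m n u w \<and> ladj m n w v) \<and> u \<noteq> v \<and> \<not> ladj m n u v"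
proof -
  have l: "(\<forall>k<(2::nat). \<not> lwalk m n u v k) \<longleftrightarrow> \<not> lwalk m n u v 0 \<and> \<not> lwalk m n u v (Suc 0)"
    by (auto simp: less_Suc_eq numeral_2_eq_2)
  have e: "(2::nat) = Suc (Suc 0)" by simp
  show ?thesis unfolding ldist_is_def l unfolding e
    by (auto simp: lwalk0 lwalk1 lwalk2 ladj_def)
qed

lemma LV_cases:
  assumes "x \<in> LVerts m n"
  obtains h where "x = (TypeA, aline m n h)" | h where "x = (TypeT, tline m n h)"
  using assms by (auto simp: LVerts_def)

lemma LV_A: "(TypeA, aline m n h) \<in> LVerts m n" and LV_T: "(TypeT, tline m n h) \<in> LVerts m n"
  by (auto simp: LVerts_def)

lemma in_aline: "elt m n (h @ apow k) \<in> aline m n h" by (auto simp: aline_def)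
lemma in_tline: "elt m n (h @ tpow k) \<in> tline m n h" by (auto simp: tline_def)
lemma in_aline0: "elt m n h \<in> aline m n h" using in_aline[of m n h 0] by (simp add: apow_def)
lemma in_tline0: "elt m n h \<in> tline m n h" using in_tline[of m n h 0] by (simp add: tpow_def)
lemma tpow_m1: "tpow (-1) = [TT']" by (simp add: tpow_def)

lemma aline_eq:
  assumes "elt m n (h @ apow k') = elt m n (g @ apow k)"
  shows "aline m n h = aline m n g"
  using gline_eq[of m n h GA k' g k] assms by (simp add: apow_gp aline_gline)

lemma tline_eq:
  assumes "elt m n (h @ tpow k') = elt m n (g @ tpow k)"
  shows "tline m n h = tline m n g"
  using gline_eq[of m n h GT k' g k] assms by (simp add: tpow_gp tline_gline)

lemma finite_bound:
  assumes "finite V" "\<forall>v\<in>V. \<exists>L::int. \<forall>l. Q v l \<longrightarrow> l \<le> L"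
  shows "\<exists>L. \<forall>v\<in>V. \<forall>l. Q v l \<longrightarrow> l \<le> L"
  using assms
proof (induction V rule: finite_induct)
  case empty
  then show ?case by simp
next
  case (insert x F)
  then obtain L1 where L1: "\<forall>v\<in>F. \<forall>l. Q v l \<longrightarrow> l \<le> L1" by auto
  obtain L2 where L2: "\<forall>l. Q x l \<longrightarrow> l \<le> L2" using insert.prems by auto
  show ?case
    by (rule exI[of _ "max L1 L2"]) (use L1 L2 in fastforce)
qed



lemma fwd:
  assumes m0: "m \<noteq> 0" and n0: "n \<noteq> 0" and mn: "\<bar>m\<bar> < \<bar>n\<bar>"
    and u: "u = (TypeA, aline m n g)"
  shows "\<exists>Vu. finite Vu \<and> Vu \<subseteq> LVerts m n \<and> (\<forall>v\<in>Vu. ldist_is m n u v 2)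
          \<and> lk m n u \<subseteq> (\<Union>v\<in>Vu. lk m n v)"
proof -
  define V where "V i = (TypeA, aline m n (g @ apow i @ [TT']))" for i
  have r1: "rr m n \<noteq> 1" using rr_gt1[OF m0 mn] by auto
  have disj: "aline m n g \<inter> aline m n (g @ apow i @ [TT']) = {}" for i
  proof (rule ccontr)
    assume "aline m n g \<inter> aline m n (g @ apow i @ [TT']) \<noteq> {}"
    then obtain k k' where e: "elt m n (g @ apow k) = elt m n ((g @ apow i @ [TT']) @ apow k')"
      by (auto simp: aline_def)
    have "rho m n (g @ apow k) = rho m n ((g @ apow i @ [TT']) @ apow k')"
      using rho_elt[OF e m0 n0] .
    then have "fst (rho m n g) = fst (rho m n g) * inverse (rr m n)"
      by (simp add: rho_append rho_apow cmp_def)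
    then have "inverse (rr m n) = 1" using rho_scale_nz[OF m0 n0, of g] by simp
    then show False using r1 by (simp add: inverse_eq_iff_eq)
  qed
  have dist: "ldist_is m n u (V i) 2" for i
  proof -
    define W where "W = (TypeT, tline m n (g @ apow i))"
    have "ladj m n u W"
      using in_aline[of m n g i] in_tline0[of m n "g @ apow i"]
      by (auto simp: ladj_def u W_def LV_A LV_T)
    moreover have "ladj m n W (V i)"
      using in_tline[of m n "g @ apow i" "-1"] in_aline0[of m n "g @ apow i @ [TT']"]
      by (auto simp: ladj_def V_def W_def LV_A LV_T tpow_m1)
    moreover have "u \<noteq> V i"
      using disj[of i] in_aline0[of m n g] by (auto simp: u V_def)
    moreover have "\<not> ladj m n u (V i)"
      using disj[of i] by (auto simp: u V_def ladj_def)
    ultimately show ?thesis unfolding ldist2 by blast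
  qed
  have cover: "x \<in> (\<Union>v\<in>V ` {0..<\<bar>m\<bar>}. lk m n v)" if x: "x \<in> lk m n u" for x
  proof -
    have ax: "ladj m n u x" using x lk_iff by blast
    then have xL: "x \<in> LVerts m n" by (simp add: ladj_def)
    then show ?thesis
    proof (cases rule: LV_cases)
      case (1 h)
      with ax obtain X where "X \<in> aline m n g" "X \<in> aline m n h" by (auto simp: ladj_def u)
      then obtain k k' where "elt m n (h @ apow k') = elt m n (g @ apow k)"
        by (auto simp: aline_def)
      then have "aline m n h = aline m n g" by (rule aline_eq)
      then show ?thesis using ax 1 by (simp add: ladj_def u)
    next
      case (2 h)
      with ax obtain X where "X \<in> aline m n g" "X \<in> tline m n h" by (auto simp: ladj_def u)
      then obtain k j where e: "elt m n (h @ tpow j) = elt m n (g @ apow k)"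
        by (auto simp: aline_def tline_def)
      have "tline m n h = tline m n (g @ apow k)"
        using tline_eq[of m n h j "g @ apow k" 0] e by (simp add: tpow_def)
      then have xk: "x = (TypeT, tline m n (g @ apow k))" using 2 by simp
      define i0 where "i0 = k mod \<bar>m\<bar>"
      define q where "q = (if 0 < m then k div \<bar>m\<bar> else - (k div \<bar>m\<bar>))"
      have d: "k = \<bar>m\<bar> * (k div \<bar>m\<bar>) + k mod \<bar>m\<bar>" by simp
      have mq: "m * q = \<bar>m\<bar> * (k div \<bar>m\<bar>)" by (simp add: q_def abs_if)
      have kq: "k = i0 + m * q" using d mq unfolding i0_def by linarith
      have i0r: "i0 \<in> {0..<\<bar>m\<bar>}" using m0 by (simp add: i0_def)
      have "beq m n (g @ apow i0 @ [TT'] @ apow (n * q)) (g @ apow i0 @ apow (m * q) @ [TT'])"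
        using beq_left[OF conj_int[of m n], of "g @ apow i0"] by simp
      also have "beq m n \<dots> (g @ apow k @ [TT'])"
        using beq_cong[OF gp_add[of m n GA i0 "m * q"], of g "[TT']"] kq by (simp add: apow_gp)
      finally have "elt m n ((g @ apow i0 @ [TT']) @ apow (n * q)) = elt m n ((g @ apow k) @ tpow (-1))"
        using elt_eq by (simp add: tpow_m1)
      then have "snd (V i0) \<inter> snd x \<noteq> {}"
        using in_aline[of m n "g @ apow i0 @ [TT']" "n * q"] in_tline[of m n "g @ apow k" "-1"]
        by (auto simp: V_def xk)
      then have "ladj m n (V i0) x" using xL by (auto simp: ladj_def V_def xk LV_A)
      then show ?thesis using i0r lk_iff by blast
    qed
  qed
  show ?thesis
    by (rule exI[of _ "V ` {0..<\<bar>m\<bar>}"]) (use dist cover in \<open>auto simp: V_def LV_A\<close>)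
qed



lemma bwd:
  assumes m0: "m \<noteq> 0" and n0: "n \<noteq> 0" and mn: "\<bar>m\<bar> < \<bar>n\<bar>"
    and u: "u = (TypeT, tline m n g)"
    and fin: "finite Vu" and sub: "Vu \<subseteq> LVerts m n" and d2: "\<forall>v\<in>Vu. ldist_is m n u v 2"
    and cov: "lk m n u \<subseteq> (\<Union>v\<in>Vu. lk m n v)"
  shows False
proof -
  define r where "r = rr m n"
  have r1: "1 < \<bar>r\<bar>" using rr_gt1[OF m0 mn] by (simp add: r_def)
  define Q where "Q (v::ltype \<times> word set set) (l::int) = (snd v \<inter> aline m n (g @ tpow l) \<noteq> {})" for v l
  have sg: "fst (rho m n g) \<noteq> 0" using rho_scale_nz[OF m0 n0] .
  have bnd: "\<exists>L::int. \<forall>l. Q v l \<longrightarrow> l \<le> L" if v: "v \<in> Vu" for v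
  proof -
    have vu: "v \<noteq> u" using d2 v by (auto simp: ldist2)
    have "\<exists>C. \<forall>l. Q v l \<longrightarrow> \<bar>r\<bar> powi l \<le> C"
    proof -
      have "v \<in> LVerts m n" using sub v by auto
      then show ?thesis
      proof (cases rule: LV_cases)
        case (1 h)
        show ?thesis
        proof (intro exI allI impI)
          fix l assume "Q v l"
          then obtain k1 k2 where e: "elt m n (h @ apow k1) = elt m n ((g @ tpow l) @ apow k2)"
            by (auto simp: Q_def 1 aline_def)
          have "fst (rho m n h) = fst (rho m n g) * r powi l"
            using rho_elt[OF e m0 n0] by (simp add: rho_append rho_apow rho_tpow cmp_def r_def)
          then have "\<bar>fst (rho m n h)\<bar> = \<bar>fst (rho m n g)\<bar> * \<bar>r\<bar> powi l"
            by (simp add: abs_mult power_int_abs)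
          then show "\<bar>r\<bar> powi l \<le> \<bar>fst (rho m n h)\<bar> / \<bar>fst (rho m n g)\<bar>"
            using sg by simp
        qed
      next
        case (2 h)
        show ?thesis
        proof (intro exI allI impI)
          fix l assume "Q v l"
          then obtain i k where e: "elt m n (h @ tpow i) = elt m n ((g @ tpow l) @ apow k)"
            by (auto simp: Q_def 2 aline_def tline_def)
          have k0: "k \<noteq> 0"
          proof
            assume "k = 0"
            then have "elt m n (h @ tpow i) = elt m n (g @ tpow l)" using e by (simp add: apow_def)
            then have "tline m n h = tline m n g" by (rule tline_eq)
            then show False using vu by (simp add: u 2)
          qed
          have "snd (rho m n h) = fst (rho m n g) * (r powi l * of_int k) + snd (rho m n g)"
            using rho_elt[OF e m0 n0] by (simp add: rho_append rho_apow rho_tpow cmp_def r_def)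
          then have "\<bar>snd (rho m n h) - snd (rho m n g)\<bar> = \<bar>fst (rho m n g)\<bar> * (\<bar>r\<bar> powi l * \<bar>of_int k\<bar>)"
            by (simp add: abs_mult power_int_abs)
          moreover have "\<bar>r\<bar> powi l \<le> \<bar>r\<bar> powi l * \<bar>of_int k\<bar>"
          proof -
            have "(1::real) \<le> \<bar>of_int k\<bar>" using k0 by linarith
            moreover have "0 \<le> \<bar>r\<bar> powi l" by simp
            ultimately show ?thesis by (metis mult.right_neutral mult_left_mono)
          qed
          ultimately show "\<bar>r\<bar> powi l \<le> \<bar>snd (rho m n h) - snd (rho m n g)\<bar> / \<bar>fst (rho m n g)\<bar>"
            using sg by (simp add: field_simps)
        qed
      qed
    qed
    then obtain C where C: "\<forall>l. Q v l \<longrightarrow> \<bar>r\<bar> powi l \<le> C" by blast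
    obtain L where "\<forall>l::int. \<bar>r\<bar> powi l \<le> C \<longrightarrow> l \<le> L" using arch_bound[OF r1] by blast
    then show ?thesis using C by blast
  qed
  obtain L where L: "\<forall>v\<in>Vu. \<forall>l. Q v l \<longrightarrow> l \<le> L"
    using finite_bound[OF fin] bnd by blast
  define A where "A = (TypeA, aline m n (g @ tpow (L + 1)))"
  have "ladj m n u A"
    using in_tline[of m n g "L+1"] in_aline0[of m n "g @ tpow (L+1)"]
    by (auto simp: ladj_def u A_def LV_A LV_T)
  then have "A \<in> lk m n u" using lk_iff by blast
  then obtain v where v: "v \<in> Vu" "A \<in> lk m n v" using cov by blast
  then have "ladj m n v A" using lk_iff by blast
  then have "Q v (L + 1)" by (auto simp: Q_def A_def ladj_def)
  then show False using L v by fastforce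
qed

theorem lemma3p3:
  fixes m n :: int and u :: "ltype \<times> word set set"
  assumes "m \<noteq> 0" and "n \<noteq> 0" and "\<bar>m\<bar> < \<bar>n\<bar>"
    and "u \<in> LVerts m n"
  shows "fst u = TypeA \<longleftrightarrow>
    (\<exists>Vu. finite Vu \<and> Vu \<subseteq> LVerts m n \<and> (\<forall>v\<in>Vu. ldist_is m n u v 2)
          \<and> lk m n u \<subseteq> (\<Union>v\<in>Vu. lk m n v))"
  using assms(4)
proof (cases rule: LV_cases)
  case (1 h)
  then show ?thesis using fwd[OF assms(1-3) 1] by simp
next
  case (2 h)
  then show ?thesis using bwd[OF assms(1-3) 2] by auto
qed


end
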